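(* The logic $\mathsf{iCC}:=\mathsf{ICK}\oplus(p\mathrel{\Box\!\!\!\rightarrow} p)\oplus(((p\mathrel{\Box\!\!\!\rightarrow} q)\wedge((p\wedge q)\mathrel{\Box\!\!\!\rightarrow} r))\to(p\mathrel{\Box\!\!\!\rightarrow} r))\oplus(((p\mathrel{\Box\!\!\!\rightarrow} q)\wedge(p\mathrel{\Box\!\!\!\rightarrow} r))\to((p\wedge q)\mathrel{\Box\!\!\!\rightarrow} r))$ is sound and complete with respect to the class of cautious conditional frames.
   Context: Formulas: $\phi ::= p\mid\bot\mid\phi\wedge\phi\mid\phi\vee\phi\mid\phi\to\phi\mid\phi\mathrel{\Box\!\!\!\rightarrow}\phi$. $\mathsf{ICK}\oplus\Gamma$ is the smallest set containing intuitionistic propositional logic, $\Gamma$, $(p\mathrel{\Box\!\!\!\rightarrow}(q\wedge r))\leftrightarrow((p\mathrel{\Box\!\!\!\rightarrow} q)\wedge(p\mathrel{\Box\!\!\!\rightarrow} r))$ and $(p\mathrel{\Box\!\!\!\rightarrow}\top)\leftrightarrow\top$, closed under uniform substitution, modus ponens and congruence rules for both arguments of $\mathrel{\Box\!\!\!\rightarrow}$. A conditional frame is $(X,\leq,\mathcal{R})$, $(X,\leq)$ a nonempty preorder, $\mathcal{R}=\{R_a\mid a\text{ an upset}\}$ with $(\leq\circ R_a)\subseteq(R_a\circ\leq)$; valuations assign upsets to letters and $x\models\phi\mathrel{\Box\!\!\!\rightarrow}\psi$ iff every $y$ with $xR_{V(\phi)}y$ satisfies $\psi$. A cautious conditional frame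 is one satisfying, for all $x$ and upsets $a,b$: $R_a[x]\subseteq a$, and $R_a[x]\subseteq b\subseteq a$ implies ${\uparrow}R_a[x]={\uparrow}R_b[x]$. *)

theory Defs
  imports Main
begin

datatype form =
    Var nat
  | Bot
  | Conj form form
  | Disj form form
  | Imp form form
  | Cond form form

definition Top :: form where "Top = Imp Bot Bot"
definition Iff :: "form \<Rightarrow> form \<Rightarrow> form" where
  "Iff a b = Conj (Imp a b) (Imp b a)"

fun subst :: "(nat \<Rightarrow> form) \<Rightarrow> form \<Rightarrow> form" where
  "subst s (Var n) = s n"
| "subst s Bot = Bot"
| "subst s (Conj a b) = Conj (subst s a) (subst s b)"
| "subst s (Disj a b) = Disj (subst s a) (subst s b)"
| "subst s (Imp a b) = Imp (subst s a) (subst s b)"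
| "subst s (Cond a b) = Cond (subst s a) (subst s b)"

abbreviation "pp \<equiv> Var 0"
abbreviation "qq \<equiv> Var 1"
abbreviation "rr \<equiv> Var 2"

text \<open>A standard Hilbert axiomatisation of intuitionistic propositional logic
(with modus ponens and uniform substitution it generates IPL in the full language).\<close>
definition IPC_axioms :: "form set" where
  "IPC_axioms = {
     Imp pp (Imp qq pp),
     Imp (Imp pp (Imp qq rr)) (Imp (Imp pp qq) (Imp pp rr)),
     Imp (Conj pp qq) pp,
     Imp (Conj pp qq) qq,
     Imp pp (Imp qq (Conj pp qq)),
     Imp pp (Disj pp qq),
     Imp qq (Disj pp qq),
     Imp (Imp pp rr) (Imp (Imp qq rr) (Imp (Disj pp qq) rr)),
     Imp Bot pp }"

definition ICK_axioms :: "form set" where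
  "ICK_axioms = {
     Iff (Cond pp (Conj qq rr)) (Conj (Cond pp qq) (Cond pp rr)),
     Iff (Cond pp Top) Top }"

inductive_set ICK_ext :: "form set \<Rightarrow> form set" for \<Gamma> :: "form set" where
  ipc: "a \<in> IPC_axioms \<Longrightarrow> a \<in> ICK_ext \<Gamma>"
| gam: "a \<in> \<Gamma> \<Longrightarrow> a \<in> ICK_ext \<Gamma>"
| ick: "a \<in> ICK_axioms \<Longrightarrow> a \<in> ICK_ext \<Gamma>"
| sub: "a \<in> ICK_ext \<Gamma> \<Longrightarrow> subst s a \<in> ICK_ext \<Gamma>"
| mp: "Imp a b \<in> ICK_ext \<Gamma> \<Longrightarrow> a \<in> ICK_ext \<Gamma> \<Longrightarrow> b \<in> ICK_ext \<Gamma>"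
| congL: "Iff a b \<in> ICK_ext \<Gamma> \<Longrightarrow> Iff (Cond a c) (Cond b c) \<in> ICK_ext \<Gamma>"
| congR: "Iff a b \<in> ICK_ext \<Gamma> \<Longrightarrow> Iff (Cond c a) (Cond c b) \<in> ICK_ext \<Gamma>"

definition iCC :: "form set" where
  "iCC = ICK_ext {
     Cond pp pp,
     Imp (Conj (Cond pp qq) (Cond (Conj pp qq) rr)) (Cond pp rr),
     Imp (Conj (Cond pp qq) (Cond pp rr)) (Cond (Conj pp qq) rr) }"

text \<open>A frame is given by a carrier set W (a subset of the type 'w), a relation le
(a preorder on W), and a family R of relations indexed by sets; only R a for
upsets a of W matters.\<close>

definition upset :: "'w set \<Rightarrow> ('w \<Rightarrow> 'w \<Rightarrow> bool) \<Rightarrow> 'w set \<Rightarrow> bool" where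
  "upset W le a \<longleftrightarrow> a \<subseteq> W \<and> (\<forall>x\<in>a. \<forall>y\<in>W. le x y \<longrightarrow> y \<in> a)"

definition cond_frame :: "'w set \<Rightarrow> ('w \<Rightarrow> 'w \<Rightarrow> bool) \<Rightarrow> ('w set \<Rightarrow> 'w \<Rightarrow> 'w \<Rightarrow> bool) \<Rightarrow> bool" where
  "cond_frame W le R \<longleftrightarrow>
     W \<noteq> {} \<and>
     (\<forall>x\<in>W. le x x) \<and>
     (\<forall>x\<in>W. \<forall>y\<in>W. \<forall>z\<in>W. le x y \<longrightarrow> le y z \<longrightarrow> le x z) \<and>
     (\<forall>a. upset W le a \<longrightarrow>
        (\<forall>x y. R a x y \<longrightarrow> x \<in> W \<and> y \<in> W) \<and>
        (\<forall>x\<in>W. \<forall>x'\<in>W. \<forall>y\<in>W. le x x' \<longrightarrow> R a x' y \<longrightarrow>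
            (\<exists>y'\<in>W. R a x y' \<and> le y' y)))"

definition succs :: "('w \<Rightarrow> 'w \<Rightarrow> bool) \<Rightarrow> 'w \<Rightarrow> 'w set" where
  "succs S x = {y. S x y}"

definition up :: "'w set \<Rightarrow> ('w \<Rightarrow> 'w \<Rightarrow> bool) \<Rightarrow> 'w set \<Rightarrow> 'w set" where
  "up W le A = {y\<in>W. \<exists>x\<in>A. le x y}"

definition cautious_frame :: "'w set \<Rightarrow> ('w \<Rightarrow> 'w \<Rightarrow> bool) \<Rightarrow> ('w set \<Rightarrow> 'w \<Rightarrow> 'w \<Rightarrow> bool) \<Rightarrow> bool" where
  "cautious_frame W le R \<longleftrightarrow> cond_frame W le R \<and>
     (\<forall>x\<in>W. \<forall>a b. upset W le a \<longrightarrow> upset W le b \<longrightarrow>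
        succs (R a) x \<subseteq> a \<and>
        (succs (R a) x \<subseteq> b \<and> b \<subseteq> a \<longrightarrow>
           up W le (succs (R a) x) = up W le (succs (R b) x)))"

fun sat :: "'w set \<Rightarrow> ('w \<Rightarrow> 'w \<Rightarrow> bool) \<Rightarrow> ('w set \<Rightarrow> 'w \<Rightarrow> 'w \<Rightarrow> bool)
            \<Rightarrow> (nat \<Rightarrow> 'w set) \<Rightarrow> 'w \<Rightarrow> form \<Rightarrow> bool" where
  "sat W le R V x (Var n) \<longleftrightarrow> x \<in> V n"
| "sat W le R V x Bot \<longleftrightarrow> False"
| "sat W le R V x (Conj a b) \<longleftrightarrow> sat W le R V x a \<and> sat W le R V x b"
| "sat W le R V x (Disj a b) \<longleftrightarrow> sat W le R V x a \<or> sat W le R V x b"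
| "sat W le R V x (Imp a b) \<longleftrightarrow>
     (\<forall>y\<in>W. le x y \<longrightarrow> sat W le R V y a \<longrightarrow> sat W le R V y b)"
| "sat W le R V x (Cond a b) \<longleftrightarrow>
     (\<forall>y. R {z\<in>W. sat W le R V z a} x y \<longrightarrow> sat W le R V y b)"

definition valid_in :: "'w set \<Rightarrow> ('w \<Rightarrow> 'w \<Rightarrow> bool) \<Rightarrow> ('w set \<Rightarrow> 'w \<Rightarrow> 'w \<Rightarrow> bool) \<Rightarrow> form \<Rightarrow> bool" where
  "valid_in W le R \<phi> \<longleftrightarrow>
     (\<forall>V. (\<forall>n. upset W le (V n)) \<longrightarrow> (\<forall>x\<in>W. sat W le R V x \<phi>))"

end

theory Submission
  imports Defs
begin

section \<open>Soundness\<close>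

lemma cf_W: "cond_frame W le R \<Longrightarrow> upset W le a \<Longrightarrow> R a x y \<Longrightarrow> x \<in> W \<and> y \<in> W"
  unfolding cond_frame_def by blast

lemma cf_back:
  assumes cf: "cond_frame W le R" and a: "upset W le a" and x: "x\<in>W" and x': "x'\<in>W"
    and y: "y\<in>W" and l: "le x x'" and r: "R a x' y"
  shows "\<exists>y'\<in>W. R a x y' \<and> le y' y"
proof -
  note D = cf[unfolded cond_frame_def, THEN conjunct2, THEN conjunct2, THEN conjunct2]
  note E = D[rule_format, OF a, THEN conjunct2]
  show ?thesis using E[rule_format, OF x x' y l r] .
qed

lemma cf_refl: "cond_frame W le R \<Longrightarrow> x \<in> W \<Longrightarrow> le x x"
  unfolding cond_frame_def by (elim conjE) (erule bspec)

lemma cf_trans: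
  assumes cf: "cond_frame W le R" and x: "x \<in> W" and y: "y \<in> W" and z: "z \<in> W"
    and l1: "le x y" and l2: "le y z"
  shows "le x z"
  using cf[unfolded cond_frame_def, THEN conjunct2, THEN conjunct2, THEN conjunct1,
      rule_format, OF x y z l1 l2] .

lemma persist:
  assumes cf: "cond_frame W le R" and V: "\<forall>n. upset W le (V n)"
  shows "x \<in> W \<Longrightarrow> y \<in> W \<Longrightarrow> le x y \<Longrightarrow> sat W le R V x \<phi> \<Longrightarrow> sat W le R V y \<phi>"
proof (induction \<phi> arbitrary: x y)
  case (Var n) then show ?case using V unfolding upset_def by auto
next
  case Bot then show ?case by simp
next
  case (Conj a b) then show ?case by auto
next
  case (Disj a b) then show ?case by auto
next
  case (Imp a b)
  show ?case unfolding sat.simps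
  proof (intro ballI impI)
    fix z assume "z \<in> W" "le y z" "sat W le R V z a"
    moreover have "le x z" using cf_trans[OF cf Imp.prems(1,2) \<open>z \<in> W\<close> Imp.prems(3) \<open>le y z\<close>] .
    ultimately show "sat W le R V z b" using Imp.prems(4) by simp
  qed
next
  case (Cond a b)
  have up: "upset W le {z\<in>W. sat W le R V z a}" using Cond.IH(1) unfolding upset_def by blast
  show ?case
  proof (simp only: sat.simps, intro allI impI)
    fix z assume Rz: "R {z\<in>W. sat W le R V z a} y z"
    have zW: "z\<in>W" using cf_W[OF cf up Rz] by blast
    obtain z' where z': "z'\<in>W" "R {z\<in>W. sat W le R V z a} x z'" "le z' z"
      using cf_back[OF cf up Cond.prems(1,2) zW Cond.prems(3) Rz] by blast
    then have "sat W le R V z' b" using Cond.prems(4) by simp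
    then show "sat W le R V z b" using Cond.IH(2)[OF z'(1) zW z'(3)] by blast
  qed
qed

lemma upset_ext:
  assumes cf: "cond_frame W le R" and V: "\<forall>n. upset W le (V n)"
  shows "upset W le {z\<in>W. sat W le R V z a}"
  using persist[OF cf V] unfolding upset_def by blast

lemma sat_subst:
  assumes cf: "cond_frame W le R" and V: "\<forall>n. upset W le (V n)"
  shows "x \<in> W \<Longrightarrow> sat W le R V x (subst s \<phi>) =
     sat W le R (\<lambda>n. {z\<in>W. sat W le R V z (s n)}) x \<phi>"
proof (induction \<phi> arbitrary: x)
  case (Var n) then show ?case by simp
next
  case Bot then show ?case by simp
next
  case (Conj a b) then show ?case by simp
next
  case (Disj a b) then show ?case by simp
next
  case (Imp a b) then show ?case by simp
next
  case (Cond a b)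
  let ?V' = "\<lambda>n. {z\<in>W. sat W le R V z (s n)}"
  have eq: "{z\<in>W. sat W le R V z (subst s a)} = {z\<in>W. sat W le R ?V' z a}"
    using Cond.IH(1) by blast
  have up: "upset W le {z\<in>W. sat W le R V z (subst s a)}" by (rule upset_ext[OF cf V])
  show ?case
    apply (simp only: subst.simps sat.simps eq[symmetric])
    using Cond.IH(2) cf_W[OF cf up] by blast
qed

lemma valid_subst:
  assumes cf: "cond_frame W le R" and v: "valid_in W le R \<phi>"
  shows "valid_in W le R (subst s \<phi>)"
  unfolding valid_in_def
proof (intro allI impI ballI)
  fix V x assume V: "\<forall>n::nat. upset W le (V n)" and x: "x \<in> W"
  have V': "\<And>n. upset W le {z\<in>W. sat W le R V z (s n)}" using upset_ext[OF cf V] by blast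
  have "sat W le R (\<lambda>n. {z\<in>W. sat W le R V z (s n)}) x \<phi>"
    using v[unfolded valid_in_def, rule_format, OF V' x] .
  then show "sat W le R V x (subst s \<phi>)"
    using sat_subst[OF cf V x] by simp
qed

lemma valid_Iff:
  assumes cf: "cond_frame W le R"
  shows "valid_in W le R (Iff a b) \<longleftrightarrow>
    (\<forall>V. (\<forall>n. upset W le (V n)) \<longrightarrow> (\<forall>x\<in>W. sat W le R V x a = sat W le R V x b))"
  unfolding valid_in_def Iff_def using cf_refl[OF cf] by auto

lemma sound:
  assumes cc: "cautious_frame W le R" and phi: "\<phi> \<in> iCC"
  shows "valid_in W le R \<phi>"
proof -
  have cf: "cond_frame W le R" using cc unfolding cautious_frame_def by blast
  have caut: "\<And>x a b. x \<in> W \<Longrightarrow> upset W le a \<Longrightarrow> upset W le b \<Longrightarrow>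
        succs (R a) x \<subseteq> a \<and>
        (succs (R a) x \<subseteq> b \<and> b \<subseteq> a \<longrightarrow>
           up W le (succs (R a) x) = up W le (succs (R b) x))"
    using cc unfolding cautious_frame_def by blast
  note pers = persist[OF cf]
  note tr = cf_trans[OF cf]
  note rf = cf_refl[OF cf]
  have G: "valid_in W le R g" if g: "g \<in> {
     Cond pp pp,
     Imp (Conj (Cond pp qq) (Cond (Conj pp qq) rr)) (Cond pp rr),
     Imp (Conj (Cond pp qq) (Cond pp rr)) (Cond (Conj pp qq) rr) }" for g
  proof -
    { fix V x assume V: "\<forall>n::nat. upset W le (V n)" and x: "x \<in> W"
      have upV: "upset W le (V n)" for n using V by blast
      have ups: "upset W le {z\<in>W. sat W le R V z f}" for f by (rule upset_ext[OF cf V])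
      have e0: "{z\<in>W. z \<in> V 0} = V 0" using upV[of 0] unfolding upset_def by auto
      have e01: "{z\<in>W. z \<in> V 0 \<and> z \<in> V 1} = V 0 \<inter> V 1"
        using upV[of 0] unfolding upset_def by auto
      have u01: "upset W le (V 0 \<inter> V 1)" using upV[of 0] upV[of 1] unfolding upset_def by blast
      have "sat W le R V x (Cond pp pp)"
        using caut[OF x upV[of 0] upV[of 0]] e0 unfolding succs_def by (simp only: sat.simps) blast
      moreover have "sat W le R V x (Imp (Conj (Cond pp qq) (Cond (Conj pp qq) rr)) (Cond pp rr))"
      proof (simp only: sat.simps e0 e01, intro ballI impI allI)
        fix y z assume y: "y \<in> W" "le x y"
          and h: "(\<forall>y'. R (V 0) y y' \<longrightarrow> y' \<in> V 1) \<and> (\<forall>y'. R (V 0 \<inter> V 1) y y' \<longrightarrow> y' \<in> V 2)"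
          and Rz: "R (V 0) y z"
        have s1: "succs (R (V 0)) y \<subseteq> V 0 \<inter> V 1"
          using caut[OF y(1) upV[of 0] upV[of 0]] h unfolding succs_def by auto
        have eq: "up W le (succs (R (V 0)) y) = up W le (succs (R (V 0 \<inter> V 1)) y)"
          using caut[OF y(1) upV[of 0] u01] s1 by blast
        have zW: "z \<in> W" using cf_W[OF cf upV Rz] by blast
        have "z \<in> up W le (succs (R (V 0)) y)" using zW Rz rf unfolding up_def succs_def by blast
        then obtain z' where "R (V 0 \<inter> V 1) y z'" "le z' z" using eq unfolding up_def succs_def by auto
        moreover have "z' \<in> W" using cf_W[OF cf u01 \<open>R (V 0 \<inter> V 1) y z'\<close>] by blast
        ultimately show "z \<in> V 2" using h upV[of 2] zW unfolding upset_def by blast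
      qed
      moreover have "sat W le R V x (Imp (Conj (Cond pp qq) (Cond pp rr)) (Cond (Conj pp qq) rr))"
      proof (simp only: sat.simps e0 e01, intro ballI impI allI)
        fix y z assume y: "y \<in> W" "le x y"
          and h: "(\<forall>y'. R (V 0) y y' \<longrightarrow> y' \<in> V 1) \<and> (\<forall>y'. R (V 0) y y' \<longrightarrow> y' \<in> V 2)"
          and Rz: "R (V 0 \<inter> V 1) y z"
        have s1: "succs (R (V 0)) y \<subseteq> V 0 \<inter> V 1"
          using caut[OF y(1) upV[of 0] upV[of 0]] h unfolding succs_def by auto
        have eq: "up W le (succs (R (V 0)) y) = up W le (succs (R (V 0 \<inter> V 1)) y)"
          using caut[OF y(1) upV[of 0] u01] s1 by blast
        have zW: "z \<in> W" using cf_W[OF cf u01 Rz] by blast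
        have "z \<in> up W le (succs (R (V 0 \<inter> V 1)) y)" using zW Rz rf unfolding up_def succs_def by blast
        then obtain z' where "R (V 0) y z'" "le z' z" using eq unfolding up_def succs_def by auto
        moreover have "z' \<in> W" using cf_W[OF cf upV \<open>R (V 0) y z'\<close>] by blast
        ultimately show "z \<in> V 2" using h upV[of 2] zW unfolding upset_def by blast
      qed
      ultimately have "sat W le R V x g" using g by blast
    }
    then show ?thesis unfolding valid_in_def by blast
  qed
  have I: "valid_in W le R a" if "a \<in> IPC_axioms" for a
  proof -
    { fix V x assume V: "\<forall>n::nat. upset W le (V n)" and x: "x \<in> W"
      have uV: "\<And>n y z. y \<in> V n \<Longrightarrow> z \<in> W \<Longrightarrow> le y z \<Longrightarrow> z \<in> V n"
        using V unfolding upset_def by blast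
      have VW: "\<And>n y. y \<in> V n \<Longrightarrow> y \<in> W" using V unfolding upset_def by blast
      have "sat W le R V x (Imp pp (Imp qq pp))" using x by (simp) (meson VW tr uV)
      moreover have "sat W le R V x (Imp (Imp pp (Imp qq rr)) (Imp (Imp pp qq) (Imp pp rr)))"
        using x by (simp) (meson VW tr rf uV)
      moreover have "sat W le R V x (Imp (Conj pp qq) pp)" by simp
      moreover have "sat W le R V x (Imp (Conj pp qq) qq)" by simp
      moreover have "sat W le R V x (Imp pp (Imp qq (Conj pp qq)))" using x by (simp) (meson VW tr uV)
      moreover have "sat W le R V x (Imp pp (Disj pp qq))" by simp
      moreover have "sat W le R V x (Imp qq (Disj pp qq))" by simp
      moreover have "sat W le R V x (Imp (Imp pp rr) (Imp (Imp qq rr) (Imp (Disj pp qq) rr)))"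
        using x by (simp) (meson VW tr rf uV)
      moreover have "sat W le R V x (Imp Bot pp)" by simp
      ultimately have "sat W le R V x a" using that unfolding IPC_axioms_def by blast
    }
    then show ?thesis unfolding valid_in_def by blast
  qed
  have K: "valid_in W le R a" if "a \<in> ICK_axioms" for a
    using that unfolding ICK_axioms_def
    by (auto simp: valid_Iff[OF cf] Top_def)
  show ?thesis using phi unfolding iCC_def
  proof (induction rule: ICK_ext.induct)
    case (ipc a) then show ?case by (rule I)
  next
    case (gam a) then show ?case by (rule G)
  next
    case (ick a) then show ?case by (rule K)
  next
    case (sub a s) then show ?case using valid_subst[OF cf] by blast
  next
    case (mp a b) then show ?case unfolding valid_in_def using rf by auto
  next
    case (congL a b c)
    show ?case unfolding valid_Iff[OF cf]
    proof (intro allI impI ballI)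
      fix V x assume V: "\<forall>n::nat. upset W le (V n)" and x: "x \<in> W"
      have "{z\<in>W. sat W le R V z a} = {z\<in>W. sat W le R V z b}"
        using congL.IH V unfolding valid_Iff[OF cf] by blast
      then show "sat W le R V x (Cond a c) = sat W le R V x (Cond b c)" by simp
    qed
  next
    case (congR a b c)
    show ?case unfolding valid_Iff[OF cf]
    proof (intro allI impI ballI)
      fix V x assume V: "\<forall>n::nat. upset W le (V n)" and x: "x \<in> W"
      have e: "\<And>y. y \<in> W \<Longrightarrow> sat W le R V y a = sat W le R V y b"
        using congR.IH V unfolding valid_Iff[OF cf] by blast
      have "\<And>y. R {z\<in>W. sat W le R V z c} x y \<Longrightarrow> y \<in> W"
        using cf_W[OF cf upset_ext[OF cf V]] by blast
      then show "sat W le R V x (Cond c a) = sat W le R V x (Cond c b)" using e by auto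
    qed
  qed
qed


section \<open>Proof theory\<close>

definition s3 :: "form \<Rightarrow> form \<Rightarrow> form \<Rightarrow> nat \<Rightarrow> form" where
  "s3 a b c n = (if n = 0 then a else if n = 1 then b else c)"

lemma L_mp: "Imp a b \<in> iCC \<Longrightarrow> a \<in> iCC \<Longrightarrow> b \<in> iCC"
  unfolding iCC_def by (rule ICK_ext.mp)
lemma L_congL: "Iff a b \<in> iCC \<Longrightarrow> Iff (Cond a c) (Cond b c) \<in> iCC"
  unfolding iCC_def by (rule ICK_ext.congL)
lemma L_congR: "Iff a b \<in> iCC \<Longrightarrow> Iff (Cond c a) (Cond c b) \<in> iCC"
  unfolding iCC_def by (rule ICK_ext.congR)
lemma ipc_inst: "\<phi> \<in> IPC_axioms \<Longrightarrow> subst (s3 a b c) \<phi> \<in> iCC"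
  unfolding iCC_def by (intro ICK_ext.sub ICK_ext.ipc)
lemma ick_inst: "\<phi> \<in> ICK_axioms \<Longrightarrow> subst (s3 a b c) \<phi> \<in> iCC"
  unfolding iCC_def by (intro ICK_ext.sub ICK_ext.ick)
lemma gam_inst: "\<phi> \<in> {
     Cond pp pp,
     Imp (Conj (Cond pp qq) (Cond (Conj pp qq) rr)) (Cond pp rr),
     Imp (Conj (Cond pp qq) (Cond pp rr)) (Cond (Conj pp qq) rr) } \<Longrightarrow> subst (s3 a b c) \<phi> \<in> iCC"
  unfolding iCC_def by (intro ICK_ext.sub ICK_ext.gam)

lemma ax_K: "Imp a (Imp b a) \<in> iCC"
  using ipc_inst[of "Imp pp (Imp qq pp)" a b a] by (simp add: IPC_axioms_def s3_def)
lemma ax_S: "Imp (Imp a (Imp b c)) (Imp (Imp a b) (Imp a c)) \<in> iCC"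
  using ipc_inst[of "Imp (Imp pp (Imp qq rr)) (Imp (Imp pp qq) (Imp pp rr))" a b c]
  by (simp add: IPC_axioms_def s3_def)
lemma ax_C1: "Imp (Conj a b) a \<in> iCC"
  using ipc_inst[of "Imp (Conj pp qq) pp" a b a] by (simp add: IPC_axioms_def s3_def)
lemma ax_C2: "Imp (Conj a b) b \<in> iCC"
  using ipc_inst[of "Imp (Conj pp qq) qq" a b a] by (simp add: IPC_axioms_def s3_def)
lemma ax_CI: "Imp a (Imp b (Conj a b)) \<in> iCC"
  using ipc_inst[of "Imp pp (Imp qq (Conj pp qq))" a b a] by (simp add: IPC_axioms_def s3_def)
lemma ax_D1: "Imp a (Disj a b) \<in> iCC"
  using ipc_inst[of "Imp pp (Disj pp qq)" a b a] by (simp add: IPC_axioms_def s3_def)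
lemma ax_D2: "Imp b (Disj a b) \<in> iCC"
  using ipc_inst[of "Imp qq (Disj pp qq)" a b a] by (simp add: IPC_axioms_def s3_def)
lemma ax_DE: "Imp (Imp a c) (Imp (Imp b c) (Imp (Disj a b) c)) \<in> iCC"
  using ipc_inst[of "Imp (Imp pp rr) (Imp (Imp qq rr) (Imp (Disj pp qq) rr))" a b c]
  by (simp add: IPC_axioms_def s3_def)
lemma ax_Bot: "Imp Bot a \<in> iCC"
  using ipc_inst[of "Imp Bot pp" a a a] by (simp add: IPC_axioms_def s3_def)
lemma ax_ick1: "Iff (Cond a (Conj b c)) (Conj (Cond a b) (Cond a c)) \<in> iCC"
  using ick_inst[of "Iff (Cond pp (Conj qq rr)) (Conj (Cond pp qq) (Cond pp rr))" a b c]
  by (simp add: ICK_axioms_def s3_def Iff_def)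
lemma ax_ick2: "Iff (Cond a Top) Top \<in> iCC"
  using ick_inst[of "Iff (Cond pp Top) Top" a a a]
  by (simp add: ICK_axioms_def s3_def Iff_def Top_def)
lemma ax_g1: "Cond a a \<in> iCC"
  using gam_inst[of "Cond pp pp" a a a] by (simp add: s3_def)
lemma ax_g2: "Imp (Conj (Cond a b) (Cond (Conj a b) c)) (Cond a c) \<in> iCC"
  using gam_inst[of "Imp (Conj (Cond pp qq) (Cond (Conj pp qq) rr)) (Cond pp rr)" a b c]
  by (simp add: s3_def)
lemma ax_g3: "Imp (Conj (Cond a b) (Cond a c)) (Cond (Conj a b) c) \<in> iCC"
  using gam_inst[of "Imp (Conj (Cond pp qq) (Cond pp rr)) (Cond (Conj pp qq) rr)" a b c]
  by (simp add: s3_def)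

lemma imp_K: "b \<in> iCC \<Longrightarrow> Imp a b \<in> iCC"
  using L_mp ax_K by blast
lemma imp_refl: "Imp a a \<in> iCC"
  using L_mp[OF L_mp[OF ax_S ax_K] ax_K[of a a]] .
lemma imp_trans: "Imp a b \<in> iCC \<Longrightarrow> Imp b c \<in> iCC \<Longrightarrow> Imp a c \<in> iCC"
  using L_mp[OF L_mp[OF ax_S imp_K]] by blast
lemma imp_conj: "Imp a b \<in> iCC \<Longrightarrow> Imp a c \<in> iCC \<Longrightarrow> Imp a (Conj b c) \<in> iCC"
proof -
  assume ab: "Imp a b \<in> iCC" and ac: "Imp a c \<in> iCC"
  have "Imp a (Imp c (Conj b c)) \<in> iCC" using imp_trans[OF ab ax_CI] .
  then show ?thesis using L_mp[OF L_mp[OF ax_S]] ac by blast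
qed
lemma iffI': "Imp a b \<in> iCC \<Longrightarrow> Imp b a \<in> iCC \<Longrightarrow> Iff a b \<in> iCC"
  unfolding Iff_def using L_mp[OF L_mp[OF ax_CI]] by blast
lemma iffD1': "Iff a b \<in> iCC \<Longrightarrow> Imp a b \<in> iCC"
  unfolding Iff_def using L_mp[OF ax_C1] by blast
lemma iffD2': "Iff a b \<in> iCC \<Longrightarrow> Imp b a \<in> iCC"
  unfolding Iff_def using L_mp[OF ax_C2] by blast
lemma Top_L: "Top \<in> iCC"
  unfolding Top_def by (rule imp_refl)

lemma cond_mono: "Imp x y \<in> iCC \<Longrightarrow> Imp (Cond f x) (Cond f y) \<in> iCC"
proof -
  assume xy: "Imp x y \<in> iCC"
  have "Iff x (Conj x y) \<in> iCC" by (rule iffI'[OF imp_conj[OF imp_refl xy] ax_C1])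
  then have "Imp (Cond f x) (Cond f (Conj x y)) \<in> iCC" using iffD1'[OF L_congR] by blast
  then have "Imp (Cond f x) (Conj (Cond f x) (Cond f y)) \<in> iCC"
    using imp_trans iffD1'[OF ax_ick1] by blast
  then show ?thesis using imp_trans ax_C2 by blast
qed

lemma cond_L: "x \<in> iCC \<Longrightarrow> Cond f x \<in> iCC"
proof -
  assume x: "x \<in> iCC"
  have "Iff x Top \<in> iCC" by (rule iffI'[OF imp_K[OF Top_L] imp_K[OF x]])
  then have "Imp (Cond f Top) (Cond f x) \<in> iCC" using iffD2'[OF L_congR] by blast
  moreover have "Cond f Top \<in> iCC" using L_mp[OF iffD2'[OF ax_ick2] Top_L] .
  ultimately show ?thesis using L_mp by blast
qed

definition thy :: "form set \<Rightarrow> bool" where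
  "thy T \<longleftrightarrow> iCC \<subseteq> T \<and> (\<forall>a b. Imp a b \<in> T \<longrightarrow> a \<in> T \<longrightarrow> b \<in> T)"

definition prime :: "form set \<Rightarrow> bool" where
  "prime T \<longleftrightarrow> thy T \<and> Bot \<notin> T \<and> (\<forall>a b. Disj a b \<in> T \<longrightarrow> a \<in> T \<or> b \<in> T)"

lemma thy_mp: "thy T \<Longrightarrow> Imp a b \<in> T \<Longrightarrow> a \<in> T \<Longrightarrow> b \<in> T"
  unfolding thy_def by blast
lemma thy_L: "thy T \<Longrightarrow> a \<in> iCC \<Longrightarrow> a \<in> T"
  unfolding thy_def by blast
lemma thy_imp: "thy T \<Longrightarrow> Imp a b \<in> iCC \<Longrightarrow> a \<in> T \<Longrightarrow> b \<in> T"
  unfolding thy_def by blast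
lemma thy_conj: "thy T \<Longrightarrow> Conj a b \<in> T \<longleftrightarrow> a \<in> T \<and> b \<in> T"
  using thy_imp[OF _ ax_C1] thy_imp[OF _ ax_C2] thy_mp[OF _ thy_imp[OF _ ax_CI]] by blast
lemma thy_iCC: "thy iCC"
  unfolding thy_def using L_mp by blast
lemma prime_thy: "prime T \<Longrightarrow> thy T"
  unfolding prime_def by blast

lemma thy_rel:
  assumes T: "thy T"
  shows "thy {c. Imp a c \<in> T}" "T \<subseteq> {c. Imp a c \<in> T}" "a \<in> {c. Imp a c \<in> T}"
proof -
  show "thy {c. Imp a c \<in> T}" unfolding thy_def
  proof (intro conjI allI impI subsetI)
    fix c assume "c \<in> iCC" then show "c \<in> {c. Imp a c \<in> T}" using thy_L[OF T imp_K] by blast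
  next
    fix c d assume "Imp c d \<in> {c. Imp a c \<in> T}" "c \<in> {c. Imp a c \<in> T}"
    then show "d \<in> {c. Imp a c \<in> T}" using thy_mp[OF T thy_imp[OF T ax_S]] by blast
  qed
  show "T \<subseteq> {c. Imp a c \<in> T}" using thy_imp[OF T ax_K] by blast
  show "a \<in> {c. Imp a c \<in> T}" using thy_L[OF T imp_refl] by blast
qed

lemma prime_ext:
  assumes T: "thy T" and psi: "\<psi> \<notin> T"
  shows "\<exists>P. prime P \<and> T \<subseteq> P \<and> \<psi> \<notin> P"
proof -
  let ?F = "{S. thy S \<and> T \<subseteq> S \<and> \<psi> \<notin> S}"
  have "\<exists>M\<in>?F. \<forall>X\<in>?F. M \<subseteq> X \<longrightarrow> X = M"
  proof (rule subset_Zorn_nonempty)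
    show "?F \<noteq> {}" using T psi by blast
  next
    fix C assume C: "C \<noteq> {}" "subset.chain ?F C"
    have CF: "C \<subseteq> ?F" and ch: "\<forall>X\<in>C. \<forall>Y\<in>C. X \<subseteq> Y \<or> Y \<subseteq> X"
      using C(2) unfolding subset.chain_def by auto
    have "thy (\<Union>C)" unfolding thy_def
    proof (intro conjI allI impI)
      show "iCC \<subseteq> \<Union>C" using C(1) CF unfolding thy_def by blast
    next
      fix a b assume "Imp a b \<in> \<Union>C" "a \<in> \<Union>C"
      then obtain X Y where XY: "X \<in> C" "Y \<in> C" "Imp a b \<in> X" "a \<in> Y" by blast
      show "b \<in> \<Union>C"
      proof (cases "X \<subseteq> Y")
        case True then show ?thesis using XY CF thy_mp by blast
      next
        case False then have "Y \<subseteq> X" using ch XY by blast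
        then show ?thesis using XY CF thy_mp by blast
      qed
    qed
    moreover have "T \<subseteq> \<Union>C" using C(1) CF by blast
    moreover have "\<psi> \<notin> \<Union>C" using CF by blast
    ultimately show "\<Union>C \<in> ?F" by simp
  qed
  then obtain M where MF: "M \<in> ?F" and max0: "\<forall>X\<in>?F. M \<subseteq> X \<longrightarrow> X = M"
    by (rule bexE)
  have M: "thy M" "T \<subseteq> M" "\<psi> \<notin> M" using MF by simp_all
  have max: "X = M" if "X \<in> ?F" "M \<subseteq> X" for X
    using max0[rule_format, OF that] .
  have rel: "Imp a \<psi> \<in> M" if "a \<notin> M" for a
  proof (rule ccontr)
    assume "Imp a \<psi> \<notin> M"
    then have "{c. Imp a c \<in> M} \<in> ?F" using thy_rel[OF M(1)] M(2) by blast
    then have "{c. Imp a c \<in> M} = M" using max thy_rel(2)[OF M(1)] by blast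
    then show False using thy_rel(3)[OF M(1), of a] that by blast
  qed
  have "prime M" unfolding prime_def
  proof (intro conjI allI impI)
    show "thy M" by fact
    show "Bot \<notin> M" using thy_imp[OF M(1) ax_Bot] M(3) by blast
    fix a b assume ab: "Disj a b \<in> M"
    show "a \<in> M \<or> b \<in> M"
    proof (rule ccontr)
      assume "\<not> (a \<in> M \<or> b \<in> M)"
      then have "Imp a \<psi> \<in> M" "Imp b \<psi> \<in> M" using rel by blast+
      then have "\<psi> \<in> M" using thy_mp[OF M(1)] thy_L[OF M(1) ax_DE] ab by meson
      then show False using M(3) by blast
    qed
  qed
  then show ?thesis using M by blast
qed

lemma prime_sep:
  assumes T: "thy T" and n: "Imp a b \<notin> T"
  shows "\<exists>P. prime P \<and> T \<subseteq> P \<and> a \<in> P \<and> b \<notin> P"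
proof -
  have "b \<notin> {c. Imp a c \<in> T}" using n by blast
  then obtain P where "prime P" "{c. Imp a c \<in> T} \<subseteq> P" "b \<notin> P"
    using prime_ext[OF thy_rel(1)[OF T]] by blast
  then show ?thesis using thy_rel(2,3)[OF T] by blast
qed

lemma Bot_notin: "Bot \<notin> iCC"
proof
  assume "Bot \<in> iCC"
  have cc: "cautious_frame {()} (\<lambda>_ _. True) (\<lambda>_ _ _. False)"
    unfolding cautious_frame_def cond_frame_def succs_def up_def by auto
  have "valid_in {()} (\<lambda>_ _. True) (\<lambda>_ _ _. False) Bot" by (rule sound[OF cc \<open>Bot \<in> iCC\<close>])
  moreover have "upset {()} (\<lambda>_ _. True) {}" unfolding upset_def by simp
  ultimately show False unfolding valid_in_def by auto
qed


section \<open>Canonical model\<close>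

definition W0 :: "form set set" where "W0 = {P. prime P}"
definition le0 :: "form set \<Rightarrow> form set \<Rightarrow> bool" where "le0 x y \<longleftrightarrow> x \<subseteq> y"
definition Sig :: "form set \<Rightarrow> form \<Rightarrow> form set" where "Sig G f = {c. Cond f c \<in> G}"
definition RS :: "form set \<Rightarrow> form \<Rightarrow> form set set" where "RS G f = {D. prime D \<and> Sig G f \<subseteq> D}"
definition ext :: "form \<Rightarrow> form set set" where "ext f = {D. prime D \<and> f \<in> D}"
definition wit :: "form set set \<Rightarrow> form set \<Rightarrow> form \<Rightarrow> bool" where
  "wit a G f \<longleftrightarrow> RS G f \<subseteq> a \<and> a \<subseteq> ext f"
definition R0 :: "form set set \<Rightarrow> form set \<Rightarrow> form set \<Rightarrow> bool" where
  "R0 a G D \<longleftrightarrow> prime G \<and> prime D \<and>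
     (if \<exists>f. wit a G f then D \<in> RS G (SOME f. wit a G f) else D \<in> a)"
definition V0 :: "nat \<Rightarrow> form set set" where "V0 n = ext (Var n)"

lemma thy_Sig:
  assumes G: "thy G"
  shows "thy (Sig G f)"
  unfolding thy_def Sig_def
proof (intro conjI allI impI subsetI)
  fix x assume "x \<in> iCC" then show "x \<in> {c. Cond f c \<in> G}" using thy_L[OF G cond_L] by blast
next
  fix x y assume h: "Imp x y \<in> {c. Cond f c \<in> G}" "x \<in> {c. Cond f c \<in> G}"
  then have "Conj (Cond f (Imp x y)) (Cond f x) \<in> G" using thy_conj[OF G] by blast
  then have "Cond f (Conj (Imp x y) x) \<in> G" using thy_imp[OF G iffD2'[OF ax_ick1]] by blast
  moreover have "Imp (Conj (Imp x y) x) y \<in> iCC"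
    using L_mp[OF L_mp[OF ax_S ax_C1] ax_C2] .
  ultimately show "y \<in> {c. Cond f c \<in> G}" using thy_imp[OF G cond_mono] by blast
qed

lemma ext_conj: "ext (Conj f g) = ext f \<inter> ext g"
  unfolding ext_def using thy_conj prime_thy by blast

lemma RS_prime: "RS G f \<subseteq> W0" unfolding RS_def W0_def by blast

lemma RS_sub_ext:
  assumes G: "thy G" and h: "RS G f \<subseteq> ext c"
  shows "c \<in> Sig G f"
proof (rule ccontr)
  assume "c \<notin> Sig G f"
  then obtain P where "prime P" "Sig G f \<subseteq> P" "c \<notin> P" using prime_ext[OF thy_Sig[OF G]] by blast
  then show False using h unfolding RS_def ext_def by blast
qed

lemma ext_sub:
  assumes h: "ext c \<subseteq> ext f"
  shows "Imp c f \<in> iCC"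
proof (rule ccontr)
  assume "Imp c f \<notin> iCC"
  then obtain P where "prime P" "c \<in> P" "f \<notin> P" using prime_sep[OF thy_iCC] by blast
  then show False using h unfolding ext_def by blast
qed

lemma DL:
  assumes G: "thy G" and h1: "RS G f \<subseteq> ext c" and h2: "ext c \<subseteq> ext f"
  shows "RS G f = RS G c"
proof -
  have fc: "Cond f c \<in> G" using RS_sub_ext[OF G h1] unfolding Sig_def by blast
  have cf: "Imp c f \<in> iCC" by (rule ext_sub[OF h2])
  have iff: "Iff c (Conj f c) \<in> iCC" by (rule iffI'[OF imp_conj[OF cf imp_refl] ax_C2])
  have e1: "Cond c t \<in> G \<longleftrightarrow> Cond (Conj f c) t \<in> G" for t
    using thy_imp[OF G iffD1'[OF L_congL[OF iff]]] thy_imp[OF G iffD2'[OF L_congL[OF iff]]] by blast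
  have "Sig G f = Sig G c" unfolding Sig_def
  proof (intro set_eqI iffI; simp)
    fix t assume "Cond f t \<in> G"
    then have "Cond (Conj f c) t \<in> G" using thy_imp[OF G ax_g3] fc thy_conj[OF G] by blast
    then show "Cond c t \<in> G" using e1 by blast
  next
    fix t assume "Cond c t \<in> G"
    then have "Cond (Conj f c) t \<in> G" using e1 by blast
    then show "Cond f t \<in> G" using thy_imp[OF G ax_g2] fc thy_conj[OF G] by blast
  qed
  then show ?thesis unfolding RS_def by simp
qed

lemma KL:
  assumes G: "thy G" and w1: "wit a G f" and w2: "wit a G g"
  shows "RS G f = RS G g"
proof -
  have a1: "RS G f \<subseteq> a" "a \<subseteq> ext f" using w1 unfolding wit_def by auto
  have a2: "RS G g \<subseteq> a" "a \<subseteq> ext g" using w2 unfolding wit_def by auto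
  have e: "ext (Conj f g) = ext (Conj g f)" using ext_conj by blast
  have r1: "RS G f = RS G (Conj f g)" using DL[OF G] a1 a2 ext_conj by (metis Int_greatest Int_lower1 subset_trans)
  have r2: "RS G g = RS G (Conj g f)" using DL[OF G] a1 a2 ext_conj by (metis Int_greatest Int_lower1 subset_trans)
  have r3: "RS G (Conj f g) = RS G (Conj g f)"
    using DL[OF G, of "Conj f g" "Conj g f"] r1 a1 a2 e ext_conj by (metis Int_greatest subset_trans order_refl)
  show ?thesis using r1 r2 r3 by simp
qed

lemma R0_wit:
  assumes G: "prime G" and w: "wit a G f"
  shows "R0 a G D \<longleftrightarrow> D \<in> RS G f"
proof -
  have ex: "\<exists>f. wit a G f" using w by blast
  have "wit a G (SOME f. wit a G f)" using someI_ex[OF ex] .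
  then have "RS G (SOME f. wit a G f) = RS G f" using KL[OF prime_thy[OF G] _ w] by blast
  then show ?thesis unfolding R0_def using G ex by (auto simp: RS_def)
qed

lemma R0_nowit:
  assumes G: "prime G" and w: "\<not> (\<exists>f. wit a G f)"
  shows "R0 a G D \<longleftrightarrow> prime D \<and> D \<in> a"
  unfolding R0_def using G w by auto

lemma R0_in: "R0 a G D \<Longrightarrow> D \<in> a"
proof -
  assume h: "R0 a G D"
  then have G: "prime G" unfolding R0_def by blast
  show ?thesis
  proof (cases "\<exists>f. wit a G f")
    case True
    then obtain f where w: "wit a G f" by blast
    then show ?thesis using R0_wit[OF G w] h unfolding wit_def by blast
  next
    case False then show ?thesis using R0_nowit[OF G False] h by blast
  qed
qed

lemma Sig_mono: "G \<subseteq> G' \<Longrightarrow> RS G' f \<subseteq> RS G f"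
  unfolding RS_def Sig_def by blast

lemma wit_mono: "G \<subseteq> G' \<Longrightarrow> wit a G f \<Longrightarrow> wit a G' f"
  unfolding wit_def using Sig_mono by blast

lemma wit_ext: "thy G \<Longrightarrow> wit (ext f) G f"
  unfolding wit_def
proof
  assume G: "thy G"
  have "f \<in> Sig G f" unfolding Sig_def using thy_L[OF G ax_g1] by blast
  then show "RS G f \<subseteq> ext f" unfolding RS_def ext_def by blast
qed simp

lemma W0_ne: "W0 \<noteq> {}"
  using prime_ext[OF thy_iCC Bot_notin] unfolding W0_def by blast

lemma canon_cautious: "cautious_frame W0 le0 R0"
  unfolding cautious_frame_def
proof (intro conjI ballI allI impI)
  show "cond_frame W0 le0 R0" unfolding cond_frame_def
  proof (intro conjI ballI allI impI)
    show "W0 \<noteq> {}" by (rule W0_ne)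
  next
    fix x assume "x \<in> W0" then show "le0 x x" unfolding le0_def by simp
  next
    fix x y z assume "le0 x y" "le0 y z" then show "le0 x z" unfolding le0_def by blast
  next
    fix a x y assume "R0 a x y" then show "x \<in> W0" unfolding R0_def W0_def by blast
  next
    fix a x y assume "R0 a x y" then show "y \<in> W0" unfolding R0_def W0_def by blast
  next
    fix a x x' y assume x: "x \<in> W0" and x': "x' \<in> W0" and y: "y \<in> W0" and
      le: "le0 x x'" and R: "R0 a x' y"
    have xx: "x \<subseteq> x'" using le unfolding le0_def .
    have px: "prime x" and px': "prime x'" using x x' unfolding W0_def by auto
    have "R0 a x y"
    proof (cases "\<exists>f. wit a x f")
      case True
      then obtain f where w: "wit a x f" by blast
      have "y \<in> RS x' f" using R0_wit[OF px' wit_mono[OF xx w]] R by blast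
      then show ?thesis using R0_wit[OF px w] Sig_mono[OF xx] by blast
    next
      case False
      then show ?thesis using R0_nowit[OF px False] R0_in[OF R] y unfolding W0_def by blast
    qed
    then show "\<exists>y'\<in>W0. R0 a x y' \<and> le0 y' y" using y unfolding le0_def by blast
  qed
next
  fix x a b assume x: "x \<in> W0"
  show "succs (R0 a) x \<subseteq> a" unfolding succs_def using R0_in by blast
next
  fix x a b assume x: "x \<in> W0" and ua: "upset W0 le0 a" and ub: "upset W0 le0 b"
    and h: "succs (R0 a) x \<subseteq> b \<and> b \<subseteq> a"
  have px: "prime x" using x unfolding W0_def by auto
  have "succs (R0 a) x = succs (R0 b) x"
  proof (cases "\<exists>f. wit a x f")
    case True
    then obtain f where w: "wit a x f" by blast
    have sa: "succs (R0 a) x = RS x f" using R0_wit[OF px w] unfolding succs_def by blast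
    have "wit b x f" using w h sa unfolding wit_def by blast
    then have "succs (R0 b) x = RS x f" using R0_wit[OF px] unfolding succs_def by blast
    then show ?thesis using sa by simp
  next
    case False
    have sa: "succs (R0 a) x = a" using R0_nowit[OF px False] ua unfolding succs_def upset_def W0_def by blast
    then have "a = b" using h by blast
    then show ?thesis by simp
  qed
  then show "up W0 le0 (succs (R0 a) x) = up W0 le0 (succs (R0 b) x)" by simp
qed

lemma V0_upset: "upset W0 le0 (V0 n)"
  unfolding upset_def V0_def ext_def W0_def le0_def by blast

lemma truth:
  "prime G \<Longrightarrow> sat W0 le0 R0 V0 G \<phi> \<longleftrightarrow> \<phi> \<in> G"
proof (induction \<phi> arbitrary: G)
  case (Var n) then show ?case by (simp add: V0_def ext_def)
next
  case Bot then show ?case unfolding prime_def by simp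
next
  case (Conj a b) then show ?case using thy_conj[OF prime_thy] by simp
next
  case (Disj a b)
  have "Disj a b \<in> G \<longleftrightarrow> a \<in> G \<or> b \<in> G"
    using Disj.prems thy_imp[OF prime_thy[OF Disj.prems] ax_D1] thy_imp[OF prime_thy[OF Disj.prems] ax_D2]
    unfolding prime_def by blast
  then show ?case using Disj by simp
next
  case (Imp a b)
  have T: "thy G" using prime_thy[OF Imp.prems] .
  have "(\<forall>D\<in>W0. le0 G D \<longrightarrow> a \<in> D \<longrightarrow> b \<in> D) \<longleftrightarrow> Imp a b \<in> G"
  proof
    assume h: "\<forall>D\<in>W0. le0 G D \<longrightarrow> a \<in> D \<longrightarrow> b \<in> D"
    show "Imp a b \<in> G"
    proof (rule ccontr)
      assume "Imp a b \<notin> G"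
      then obtain P where "prime P" "G \<subseteq> P" "a \<in> P" "b \<notin> P" using prime_sep[OF T] by blast
      then show False using h unfolding W0_def le0_def by blast
    qed
  next
    assume "Imp a b \<in> G"
    then show "\<forall>D\<in>W0. le0 G D \<longrightarrow> a \<in> D \<longrightarrow> b \<in> D"
      unfolding W0_def le0_def using thy_mp prime_thy by blast
  qed
  moreover have "sat W0 le0 R0 V0 G (Imp a b) \<longleftrightarrow> (\<forall>D\<in>W0. le0 G D \<longrightarrow> a \<in> D \<longrightarrow> b \<in> D)"
    using Imp.IH unfolding W0_def by auto
  ultimately show ?case by simp
next
  case (Cond a b)
  have T: "thy G" using prime_thy[OF Cond.prems] .
  have e: "{z\<in>W0. sat W0 le0 R0 V0 z a} = ext a" using Cond.IH(1) unfolding W0_def ext_def by auto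
  have "sat W0 le0 R0 V0 G (Cond a b) \<longleftrightarrow> (\<forall>D. R0 (ext a) G D \<longrightarrow> sat W0 le0 R0 V0 D b)"
    by (simp only: sat.simps e)
  also have "\<dots> \<longleftrightarrow> (\<forall>D\<in>RS G a. b \<in> D)"
    using R0_wit[OF Cond.prems wit_ext[OF T]] Cond.IH(2) unfolding RS_def by auto
  also have "\<dots> \<longleftrightarrow> Cond a b \<in> G"
  proof
    assume "\<forall>D\<in>RS G a. b \<in> D"
    then have "RS G a \<subseteq> ext b" unfolding RS_def ext_def by blast
    then show "Cond a b \<in> G" using RS_sub_ext[OF T] unfolding Sig_def by blast
  qed (auto simp: RS_def Sig_def)
  finally show ?case .
qed

lemma complete:
  assumes v: "\<forall>(W :: form set set) le R. cautious_frame W le R \<longrightarrow> valid_in W le R \<phi>"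
  shows "\<phi> \<in> iCC"
proof (rule ccontr)
  assume "\<phi> \<notin> iCC"
  then obtain P where P: "prime P" "\<phi> \<notin> P" using prime_ext[OF thy_iCC] by blast
  have "valid_in W0 le0 R0 \<phi>" using v canon_cautious by blast
  then have "sat W0 le0 R0 V0 P \<phi>" using V0_upset P unfolding valid_in_def W0_def by blast
  then show False using truth[OF P(1)] P(2) by blast
qed

theorem theorem6p7:
  "(\<forall>\<phi> (W :: 'w set) le R. \<phi> \<in> iCC \<longrightarrow> cautious_frame W le R \<longrightarrow> valid_in W le R \<phi>)
   \<and> (\<forall>\<phi>. (\<forall>(W :: form set set) le R. cautious_frame W le R \<longrightarrow> valid_in W le R \<phi>)
          \<longrightarrow> \<phi> \<in> iCC)"
proof (intro conjI allI impI)
  fix \<phi> :: form and W :: "'w set" and le R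
  assume a: "\<phi> \<in> iCC" and c: "cautious_frame W le R"
  show "valid_in W le R \<phi>" by (rule sound[OF c a])
next
  fix \<phi> :: form
  assume "\<forall>(W :: form set set) le R. cautious_frame W le R \<longrightarrow> valid_in W le R \<phi>"
  then show "\<phi> \<in> iCC" by (rule complete)
qed

end
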